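(* Let $w\in\mathcal{W}^o_n$ and let $(O,E)\to(O',E')$ be one application of the step $(\psi)$ during the computation of $\Psi(w)$, with $O=o_1|\cdots|o_m$ and (when $o_m$ is splittable) $o_m=rs$ its standard factorization, as in the definition of $(\psi)$. Let $O'=o'_1|\cdots|o'_h$ be the Lyndon factorization of $O'$, with the convention $o'_i=\infty$ for $i\le0$. Then: (i) The Lyndon factors of $O'$ are odd and pairwise distinct, and the Lyndon factorization of $O'$ is $o_1|\cdots|o_{m-1}|r$ after a step of type (S), $o_1|\cdots|o_{m-1}|s$ after a step of type (P), and $o_1|\cdots|o_{m-2}$ after a step of type (F). (ii) $E'<o'_{h-1}$. (iii) After a step of type (F), $E'<o'_h$. (iv) After a step of type (P), $E'<o'_h$ and $E<o'_h$. (v) After a step of type (S), $s$ is the leftmost Lyndon factor of $E'$, and $o'_h<s\le E'$. (vi) All the Lyndon factors of $E'$ are even. Moreover, writing $E'=\ell E$ (so $\ell=s$, $r$, or $o_mo_{m-1}$ in cases (S), (P), (F) respectively), the word $\ell$ is contained in the leftmost Lyndon factor of $E'$ (i.e., $|\ell|$ is at most the length of that factor).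
   Context: Fix a finite totally ordered alphabet $A$. Words are finite sequences over $A$; $-$ is the empty word; $\mathcal{W}_n$ is the set of words of length $n$. $<$ is lexicographic order (a proper prefix is smaller than the word); $\infty$ is a formal symbol with $w<\infty$ for all words $w$. A Lyndon word is a nonempty word strictly smaller than each of its proper nonempty suffixes. Every word has a unique Lyndon factorization $w=\ell_1\cdots\ell_m$ into Lyndon words with $\ell_1\ge\dots\ge\ell_m$, written $\ell_1|\cdots|\ell_m$; the $\ell_i$ are the Lyndon factors. Odd/even refer to lengths. For a Lyndon word $\ell$ with $|\ell|\ge2$, its standard factorization is $\ell=rs$ with $s$ the longest proper suffix of $\ell$ that is Lyndon (equivalently the smallest proper nonempty suffix). $\mathcal{W}^o_n$: words of length $n$ whose Lyndon factors are all odd and pairwise distinct. Computation of $\Psi(w)$ for $w\in\mathcal{W}^o_n$: start with $(O,E)=(w,-)$. While $|O|\ge2$, apply step $(\psi)$: let $O=o_1|\cdots|o_m$ be its Lyndon factorization (with $o_{m-1}=\infty$ if $m=1$). Call $o_m$ splittable if $|o_m|\ge2$ and its standard factorization $o_m=rs$ satisfies $s<o_{m-1}$. Update $(O,E)$ to: (S) $(o_1\cdots o_{m-1}r,\ sE)$ if $o_m$ is splittable and $r$ is odd; (P) $(o_1\cdots o_{m-1}s,\ rE)$ if $o_m$ is splittable and $r$ is even; (F) $(o_1\cdots o_{m-2},\ o_mo_{m-1}E)$ if $o_m$ is not splittable. (If $|O|=1$ is reached, that letter is inserted into $E$ as a new Lyndon factor keeping factors weakly decreasing; this final move is not a step $(\psi)$.)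 When $O$ is empty, $\Psi(w)=E$. *)

theory Defs
  imports Main
begin

text \<open>The order on words is lexicographic order with proper prefixes smaller
  (library lexordp / lexordp_eq).  The formal symbol infinity is modelled
  by None in the type 'a list option (Some w is the word w).\<close>

definition ext_less :: "'a::linorder list option \<Rightarrow> 'a list option \<Rightarrow> bool" where
  "ext_less x y = (case y of
      None \<Rightarrow> x \<noteq> None
    | Some b \<Rightarrow> (case x of None \<Rightarrow> False | Some a \<Rightarrow> ord_class.lexordp a b))"

definition lyndon :: "'a::linorder list \<Rightarrow> bool" where
  "lyndon w \<longleftrightarrow> w \<noteq> [] \<and> (\<forall>k. 0 < k \<and> k < length w \<longrightarrow> ord_class.lexordp w (drop k w))"

definition is_lfact :: "'a::linorder list \<Rightarrow> 'a list list \<Rightarrow> bool" where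
  "is_lfact w fs \<longleftrightarrow> concat fs = w \<and> (\<forall>f\<in>set fs. lyndon f)
      \<and> sorted_wrt (\<lambda>a b. ord_class.lexordp_eq b a) fs"

definition lfact :: "'a::linorder list \<Rightarrow> 'a list list" where
  "lfact w = (THE fs. is_lfact w fs)"

definition std_k :: "'a::linorder list \<Rightarrow> nat" where
  "std_k l = (LEAST k. 0 < k \<and> k < length l \<and> lyndon (drop k l))"

definition std_r :: "'a::linorder list \<Rightarrow> 'a list" where
  "std_r l = take (std_k l) l"

definition std_s :: "'a::linorder list \<Rightarrow> 'a list" where
  "std_s l = drop (std_k l) l"

definition in_Wo :: "'a::linorder list \<Rightarrow> bool" where
  "in_Wo w \<longleftrightarrow> (\<forall>f\<in>set (lfact w). odd (length f)) \<and> distinct (lfact w)"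

datatype steptype = StepS | StepP | StepF

text \<open>o_{m-1} with the convention o_{m-1} = infinity if m = 1.\<close>
definition prev_fact :: "'a list list \<Rightarrow> 'a list option" where
  "prev_fact os = (if length os \<ge> 2 then Some (os ! (length os - 2)) else None)"

definition splittable :: "'a::linorder list list \<Rightarrow> bool" where
  "splittable os \<longleftrightarrow> length (last os) \<ge> 2 \<and> ext_less (Some (std_s (last os))) (prev_fact os)"

definition psi_step :: "'a::linorder list \<Rightarrow> 'a list \<Rightarrow> steptype \<Rightarrow> 'a list \<Rightarrow> 'a list \<Rightarrow> bool" where
  "psi_step Ob Eb t Ob' Eb' \<longleftrightarrow> length Ob \<ge> 2 \<and>
    (let os = lfact Ob; m = length os; om = last os; r = std_r om; s = std_s om in
      (t = StepS \<and> splittable os \<and> odd (length r) \<and> Ob' = concat (butlast os) @ r \<and> Eb' = s @ Eb)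
    \<or> (t = StepP \<and> splittable os \<and> even (length r) \<and> Ob' = concat (butlast os) @ s \<and> Eb' = r @ Eb)
    \<or> (t = StepF \<and> \<not> splittable os \<and> Ob' = concat (take (m - 2) os)
         \<and> Eb' = om @ os ! (m - 2) @ Eb))"

inductive psi_reach :: "'a::linorder list \<Rightarrow> 'a list \<Rightarrow> 'a list \<Rightarrow> bool" for w where
  init: "psi_reach w w []"
| step: "psi_reach w Ob Eb \<Longrightarrow> psi_step Ob Eb t Ob' Eb' \<Longrightarrow> psi_reach w Ob' Eb'"

end

theory Submission
  imports Defs "HOL-Library.List_Lexorder"
begin


lemma lex_less_iff[simp]: "ord_class.lexordp (xs::'a::linorder list) ys = (xs < ys)"
  by (simp add: lexordp_conv_lexord list_less_def)

lemma lex_le_iff[simp]: "ord_class.lexordp_eq (xs::'a::linorder list) ys = (xs \<le> ys)"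
  by (auto simp add: lexordp_eq_conv_lexord list_le_def lexordp_conv_lexord list_less_def)

lemma app_less_app[simp]: "((xs::'a::linorder list) @ us < xs @ vs) = (us < vs)"
  by (induction xs) auto

lemma less_app: "(ys::'a::linorder list) \<noteq> [] \<Longrightarrow> xs < xs @ ys"
  by (induction xs) (auto simp: neq_Nil_conv)

lemma le_app: "(xs::'a::linorder list) \<le> xs @ ys"
  using less_app[of ys xs] by (cases "ys = []") auto

lemma less_split:
  assumes "(xs::'a::linorder list) < ys"
  shows "xs @ u < ys @ v \<or> (\<exists>z. z \<noteq> [] \<and> ys = xs @ z)"
proof -
  have "ord_class.lexordp xs ys" using assms by simp
  then have "(\<exists>x vs. ys = xs @ x # vs) \<or> (\<exists>us a b vs ws. a < b \<and> xs = us @ a # vs \<and> ys = us @ b # ws)"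
    by (simp only: lexordp_iff)
  then show ?thesis
  proof
    assume "\<exists>x vs. ys = xs @ x # vs" then show ?thesis by blast
  next
    assume "\<exists>us a b vs ws. a < b \<and> xs = us @ a # vs \<and> ys = us @ b # ws"
    then obtain us a b vs ws where "a < b" "xs = us @ a # vs" "ys = us @ b # ws" by blast
    then show ?thesis by simp
  qed
qed

lemma less_len_app:
  assumes "(xs::'a::linorder list) < ys" "length ys \<le> length xs"
  shows "xs @ u < ys @ v"
  using less_split[OF assms(1), of u v] assms(2) by auto


lemma lyndonD: "lyndon w \<Longrightarrow> 0 < k \<Longrightarrow> k < length w \<Longrightarrow> w < drop k w"
  by (simp add: lyndon_def)

lemma lyndon_ne: "lyndon w \<Longrightarrow> w \<noteq> []"
  by (simp add: lyndon_def)

lemma lyndon_single: "lyndon [a]"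
  by (auto simp add: lyndon_def)

lemma lyndon_le_drop: "lyndon w \<Longrightarrow> k < length w \<Longrightarrow> w \<le> drop k w"
proof (cases "k = 0")
  case False
  assume "lyndon w" "k < length w"
  then show ?thesis using False lyndonD[of w k] by auto
qed simp

lemma lyndon_app_less:
  fixes o1 :: "'a::linorder list"
  assumes "lyndon o1" "u \<noteq> []" "u < o1" "v \<le> o1"
  shows "u @ v < o1"
proof -
  from less_split[OF assms(3), of v "[]"]
  show ?thesis
  proof
    assume "u @ v < o1 @ []" then show ?thesis by simp
  next
    assume "\<exists>z. z \<noteq> [] \<and> o1 = u @ z"
    then obtain z where z: "z \<noteq> []" "o1 = u @ z" by blast
    have "o1 < drop (length u) o1"
      using assms(1,2) z by (intro lyndonD) auto
    then have "o1 < z" using z by simp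
    with assms(4) have "v < z" by simp
    then show ?thesis using z by simp
  qed
qed

lemma lyndon_concat:
  fixes u v :: "'a::linorder list"
  assumes u: "lyndon u" and v: "lyndon v" and uv: "u < v"
  shows "lyndon (u @ v)"
proof -
  have une: "u \<noteq> []" and vne: "v \<noteq> []" using u v by (auto simp: lyndon_def)
  have key: "u @ v < v"
  proof -
    from less_split[OF uv, of v "[]"]
    show ?thesis
    proof
      assume "u @ v < v @ []" then show ?thesis by simp
    next
      assume "\<exists>z. z \<noteq> [] \<and> v = u @ z"
      then obtain z where z: "z \<noteq> []" "v = u @ z" by blast
      have "v < drop (length u) v"
        using v une z by (intro lyndonD) auto
      then have "v < z" using z by simp
      then show ?thesis using z by simp
    qed
  qed
  have "u @ v < drop k (u @ v)" if k: "0 < k \<and> k < length (u @ v)" for k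
  proof -
    consider "k < length u" | "k = length u" | "k > length u" by linarith
    then show ?thesis
    proof cases
      case 1
      have "u < drop k u" using u k 1 by (intro lyndonD) auto
      then have "u @ v < drop k u @ v" by (rule less_len_app) simp
      then show ?thesis using 1 by simp
    next
      case 2 then show ?thesis using key by simp
    next
      case 3
      have "v < drop (k - length u) v" using v k 3 by (intro lyndonD) auto
      then show ?thesis using key 3 by simp
    qed
  qed
  then show ?thesis using une by (simp add: lyndon_def)
qed

lemma concat_less:
  fixes c Y :: "'a::linorder list"
  assumes "Y \<noteq> []" "\<forall>j<length Y. c < drop j Y" "\<forall>f\<in>set fs. f \<le> c"
  shows "concat fs < Y"
  using assms
proof (induction fs arbitrary: Y)
  case Nil then show ?case by (cases Y) auto
next
  case (Cons f fs)
  have "0 < length Y" using Cons.prems(1) by simp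
  then have "c < drop 0 Y" using Cons.prems(2) by blast
  then have "c < Y" by simp
  then have fY: "f < Y" using Cons.prems(3) by auto
  from less_split[OF fY, of "concat fs" "[]"]
  show ?case
  proof
    assume "f @ concat fs < Y @ []" then show ?thesis by simp
  next
    assume "\<exists>z. z \<noteq> [] \<and> Y = f @ z"
    then obtain z where z: "z \<noteq> []" "Y = f @ z" by blast
    have "concat fs < z"
    proof (rule Cons.IH)
      show "z \<noteq> []" by fact
      show "\<forall>j<length z. c < drop j z"
      proof (intro allI impI)
        fix j assume "j < length z"
        then have "length f + j < length Y" using z by simp
        then have "c < drop (length f + j) Y" using Cons.prems(2) by blast
        then show "c < drop j z" using z by simp
      qed
      show "\<forall>f\<in>set fs. f \<le> c" using Cons.prems(3) by auto
    qed
    then show ?thesis using z by simp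
  qed
qed

lemma lyndon_le_prefix:
  fixes s sig :: "'a::linorder list"
  assumes "lyndon sig" "s \<noteq> []" "sig \<le> s @ sig"
  shows "sig \<le> s"
proof (rule ccontr)
  assume "\<not> sig \<le> s"
  then have ss: "s < sig" by simp
  from less_split[OF ss, of sig "[]"]
  show False
  proof
    assume "s @ sig < sig @ []" then show False using assms(3) by simp
  next
    assume "\<exists>z. z \<noteq> [] \<and> sig = s @ z"
    then obtain z where z: "z \<noteq> []" "sig = s @ z" by blast
    have "sig < drop (length s) sig"
      using assms(1,2) z by (intro lyndonD) auto
    then have "sig < z" using z by simp
    then have "s @ sig < sig" using z by simp
    then show False using assms(3) by simp
  qed
qed


lemma is_lfact_iff: "is_lfact w fs \<longleftrightarrow> concat fs = w \<and> (\<forall>f\<in>set fs. lyndon f)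
      \<and> sorted_wrt (\<lambda>a b. b \<le> a) fs"
  by (simp add: is_lfact_def)

lemma lfact_prefix_len:
  fixes w :: "'a::linorder list"
  assumes fl: "is_lfact w (f # fs)" and p: "lyndon p" and wq: "w = p @ q"
  shows "length p \<le> length f"
proof (rule ccontr)
  assume "\<not> length p \<le> length f"
  then have lt: "length f < length p" by simp
  have w: "w = f @ concat fs" and lf: "lyndon f" and srt: "\<forall>x\<in>set fs. x \<le> f"
    using fl by (auto simp: is_lfact_iff)
  have "take (length f) p = take (length f) w" using wq lt by simp
  also have "\<dots> = f" using w by simp
  finally have tp: "take (length f) p = f" .
  define p' where "p' = drop (length f) p"
  have pp: "p = f @ p'" using tp p'_def by (metis append_take_drop_id)
  have p'ne: "p' \<noteq> []" using lt p'_def by simp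
  have cf: "concat fs = p' @ q" using w wq pp by simp
  have fne: "f \<noteq> []" using lf lyndon_ne by blast
  have "concat fs < p'"
  proof (rule concat_less[where c = f])
    show "p' \<noteq> []" by fact
    show "\<forall>j<length p'. f < drop j p'"
    proof (intro allI impI)
      fix j assume j: "j < length p'"
      have "p < drop (length f + j) p"
        using p j fne pp by (intro lyndonD) auto
      moreover have "f \<le> p" using pp le_app by metis
      ultimately have "f < drop (length f + j) p" by simp
      then show "f < drop j p'" using pp by simp
    qed
    show "\<forall>f'\<in>set fs. f' \<le> f" using srt by blast
  qed
  moreover have "p' \<le> concat fs" using cf le_app by metis
  ultimately show False by simp
qed

lemma lfact_unique:
  fixes w :: "'a::linorder list"
  assumes "is_lfact w fs" "is_lfact w gs"
  shows "fs = gs"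
  using assms
proof (induction fs arbitrary: w gs)
  case Nil
  then have "w = []" by (simp add: is_lfact_iff)
  show ?case
  proof (cases gs)
    case (Cons g gs')
    then have "lyndon g" "concat gs = w" using Nil.prems by (auto simp: is_lfact_iff)
    then show ?thesis using \<open>w = []\<close> Cons lyndon_ne by auto
  qed simp
next
  case (Cons f fs)
  have lf: "lyndon f" and w: "w = f @ concat fs" using Cons.prems by (auto simp: is_lfact_iff)
  then have "w \<noteq> []" using lyndon_ne by auto
  then obtain g gs' where gs: "gs = g # gs'"
    using Cons.prems(2) by (cases gs) (auto simp: is_lfact_iff)
  have lg: "lyndon g" and w2: "w = g @ concat gs'" using Cons.prems gs by (auto simp: is_lfact_iff)
  have "length g \<le> length f" using lfact_prefix_len[OF Cons.prems(1) lg w2] .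
  moreover have "length f \<le> length g" using lfact_prefix_len[OF Cons.prems(2)[unfolded gs] lf w] .
  ultimately have "length f = length g" by simp
  then have fg: "f = g" using w w2 by (metis append_eq_append_conv)
  then have "concat fs = concat gs'" using w w2 by simp
  have "is_lfact (concat fs) fs" using Cons.prems(1) by (auto simp: is_lfact_iff)
  moreover have "is_lfact (concat fs) gs'" using Cons.prems(2) gs \<open>concat fs = concat gs'\<close>
    by (auto simp: is_lfact_iff)
  ultimately have "fs = gs'" by (rule Cons.IH)
  then show ?case using fg gs by simp
qed

lemma lfact_cons_nomerge:
  fixes l E :: "'a::linorder list"
  assumes "lyndon l" "is_lfact E gs" "\<forall>g\<in>set gs. g \<le> l"
  shows "is_lfact (l @ E) (l # gs)"
  using assms by (auto simp: is_lfact_iff)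

lemma lfact_merge:
  fixes l E :: "'a::linorder list"
  assumes "lyndon l" "is_lfact E gs"
  shows "\<exists>j. is_lfact (l @ E) ((l @ concat (take j gs)) # drop j gs)"
  using assms
proof (induction gs arbitrary: l E)
  case Nil then show ?case by (auto simp: is_lfact_iff)
next
  case (Cons g gs)
  have E: "E = g @ concat gs" and lg: "lyndon g" and srt: "\<forall>x\<in>set gs. x \<le> g"
    and tl: "is_lfact (concat gs) gs"
    using Cons.prems by (auto simp: is_lfact_iff)
  show ?case
  proof (cases "g \<le> l")
    case True
    have "\<forall>x\<in>set (g # gs). x \<le> l" using True srt by auto
    then have "is_lfact (l @ E) (l # g # gs)"
      using lfact_cons_nomerge[OF Cons.prems] by blast
    then show ?thesis by (intro exI[of _ 0]) simp
  next
    case False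
    then have "l < g" by simp
    then have "lyndon (l @ g)" using lyndon_concat Cons.prems(1) lg by blast
    from Cons.IH[OF this tl] obtain j where
      "is_lfact ((l @ g) @ concat gs) (((l @ g) @ concat (take j gs)) # drop j gs)" by blast
    then have "is_lfact (l @ E) ((l @ concat (take (Suc j) (g # gs))) # drop (Suc j) (g # gs))"
      using E by simp
    then show ?thesis by blast
  qed
qed

lemma lfact_exists: "\<exists>fs. is_lfact (w::'a::linorder list) fs"
proof (induction w)
  case Nil then show ?case by (intro exI[of _ "[]"]) (simp add: is_lfact_iff)
next
  case (Cons a w)
  then obtain gs where "is_lfact w gs" by blast
  from lfact_merge[OF lyndon_single this, of a] show ?case by auto
qed

lemma lfact_ok: "is_lfact (w::'a::linorder list) (lfact w)"
proof -
  obtain fs where "is_lfact w fs" using lfact_exists by blast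
  then have "\<exists>!fs. is_lfact w fs" using lfact_unique by blast
  then show ?thesis unfolding lfact_def by (rule theI')
qed

lemma lfact_eq: "is_lfact (w::'a::linorder list) fs \<Longrightarrow> lfact w = fs"
  using lfact_ok lfact_unique by blast

lemma lfact_Nil: "lfact ([]::'a::linorder list) = []"
  by (rule lfact_eq) (simp add: is_lfact_iff)

lemma concat_lfact: "concat (lfact w) = (w::'a::linorder list)"
  using lfact_ok[of w] by (simp add: is_lfact_iff)

lemma lfact_lyndon: "f \<in> set (lfact w) \<Longrightarrow> lyndon (f::'a::linorder list)"
  using lfact_ok[of w] by (simp add: is_lfact_iff)

lemma lfact_sorted: "sorted_wrt (\<lambda>a b. b \<le> a) (lfact (w::'a::linorder list))"
  using lfact_ok[of w] by (simp add: is_lfact_iff)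


lemma std_basic:
  fixes l :: "'a::linorder list"
  assumes l: "lyndon l" and len: "2 \<le> length l"
  shows "0 < std_k l \<and> std_k l < length l \<and> lyndon (std_s l)
    \<and> (\<forall>j. 0 < j \<and> j < length l \<longrightarrow> std_s l \<le> drop j l)"
proof -
  define P where "P k \<longleftrightarrow> 0 < k \<and> k < length l \<and> lyndon (drop k l)" for k
  have dl: "drop (length l - 1) l = [last l]"
    using len by (metis One_nat_def append_butlast_last_id append_eq_conv_conj length_butlast
        list.size(3) not_numeral_le_zero)
  have "P (length l - 1)" unfolding P_def using len dl lyndon_single[of "last l"] by simp
  then have Pk: "P (std_k l)" and kmin: "\<And>j. P j \<Longrightarrow> std_k l \<le> j"
    unfolding std_k_def P_def[symmetric] by (auto intro: LeastI Least_le)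
  define T where "T = (\<lambda>j. drop j l) ` {0<..<length l}"
  have "1 \<in> {0<..<length l}" using len by simp
  then have fT: "finite T" and neT: "T \<noteq> {}" unfolding T_def by auto
  define v where "v = Min T"
  have vT: "v \<in> T" using fT neT v_def by simp
  have vmin: "\<And>x. x \<in> T \<Longrightarrow> v \<le> x" using fT v_def by simp
  obtain j0 where j0: "0 < j0" "j0 < length l" "v = drop j0 l" using vT unfolding T_def by auto
  have lv: "lyndon v"
  proof -
    have "v < drop i v" if i: "0 < i" "i < length v" for i
    proof -
      have "drop i v = drop (j0 + i) l" using j0 by (simp add: add.commute)
      moreover have "drop (j0 + i) l \<in> T" unfolding T_def using i j0 by auto
      ultimately have "v \<le> drop i v" using vmin by simp
      moreover have "length (drop i v) < length v" using i by simp
      then have "v \<noteq> drop i v" by (metis less_irrefl)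
      ultimately show ?thesis by simp
    qed
    moreover have "v \<noteq> []" using j0 by simp
    ultimately show ?thesis by (simp add: lyndon_def)
  qed
  then have "P j0" unfolding P_def using j0 by simp
  then have kj: "std_k l \<le> j0" using kmin by blast
  have "std_k l = j0"
  proof (rule ccontr)
    assume "std_k l \<noteq> j0"
    then have lt: "std_k l < j0" using kj by simp
    have ls: "lyndon (drop (std_k l) l)" using Pk P_def by simp
    have "drop (std_k l) l < drop (j0 - std_k l) (drop (std_k l) l)"
      using lt j0 by (intro lyndonD[OF ls]) auto
    then have "drop (std_k l) l < v" using lt j0 by simp
    moreover have "drop (std_k l) l \<in> T" unfolding T_def using Pk P_def by auto
    ultimately show False using vmin by fastforce
  qed
  then have "std_s l = v" using j0 unfolding std_s_def by simp
  moreover have "\<forall>j. 0 < j \<and> j < length l \<longrightarrow> v \<le> drop j l"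
    using vmin unfolding T_def by auto
  ultimately show ?thesis using Pk lv unfolding P_def by simp
qed

lemma std_facts:
  fixes l :: "'a::linorder list"
  assumes l: "lyndon l" and len: "2 \<le> length l"
  defines "r \<equiv> std_r l" and "s \<equiv> std_s l"
  shows "l = r @ s" "r \<noteq> []" "s \<noteq> []" "lyndon s" "lyndon r" "r < s" "l < s" "r < l"
    "\<And>j. 0 < j \<Longrightarrow> j < length l \<Longrightarrow> s \<le> drop j l"
proof -
  note b = std_basic[OF l len]
  show lrs: "l = r @ s" unfolding r_def s_def std_r_def std_s_def by simp
  show rne: "r \<noteq> []" using b len unfolding r_def std_r_def by auto
  show sne: "s \<noteq> []" using b unfolding s_def std_s_def by simp
  show ls: "lyndon s" using b s_def by simp
  show smin: "\<And>j. 0 < j \<Longrightarrow> j < length l \<Longrightarrow> s \<le> drop j l" using b s_def by simp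
  have "l < drop (length r) l" using rne sne lrs by (intro lyndonD[OF l]) auto
  then show ls': "l < s" using lrs by simp
  show rl: "r < l" using lrs sne less_app by metis
  then show "r < s" using ls' by simp
  show "lyndon r"
  proof -
    have "r < drop j r" if j: "0 < j" "j < length r" for j
    proof (rule ccontr)
      define r' where "r' = drop j r"
      assume "\<not> r < drop j r"
      then have "r' \<le> r" using r'_def by simp
      moreover have "length r' < length r" using j r'_def by simp
      then have "r' \<noteq> r" by (metis less_irrefl)
      ultimately have rr: "r' < r" by simp
      have "l < drop j l" using j lrs by (intro lyndonD[OF l]) auto
      then have lr's: "l < r' @ s" using j lrs r'_def by simp
      from less_split[OF rr, of s s]
      show False
      proof
        assume "r' @ s < r @ s" then show False using lr's lrs by simp
      next
        assume "\<exists>z. z \<noteq> [] \<and> r = r' @ z"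
        then obtain z where z: "z \<noteq> []" "r = r' @ z" by blast
        have "r' @ z @ s < r' @ s" using lr's lrs z by simp
        then have zs: "z @ s < s" by simp
        have r'ne: "r' \<noteq> []" using j r'_def by simp
        have "s \<le> drop (length r') l" using r'ne z lrs sne by (intro smin) auto
        then have "s \<le> z @ s" using lrs z by simp
        then show False using zs by simp
      qed
    qed
    then show ?thesis using rne by (simp add: lyndon_def)
  qed
qed


lemma ext_less_simps[simp]:
  "ext_less (Some a) (Some b) = (a < b)"
  "ext_less (Some a) None = True"
  "ext_less None x = False"
  by (auto simp: ext_less_def split: option.splits)

lemma strict_nth:
  fixes xs :: "'a::linorder list list"
  assumes "sorted_wrt (\<lambda>a b. b \<le> a) xs" "distinct xs" "i < j" "j < length xs"
  shows "xs ! j < xs ! i"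
proof -
  have "xs ! j \<le> xs ! i" using assms sorted_wrt_nth_less[OF assms(1)] by blast
  moreover have "xs ! j \<noteq> xs ! i" using assms nth_eq_iff_index_eq by fastforce
  ultimately show ?thesis by simp
qed

lemma le_nth_sorted:
  fixes xs :: "'a::linorder list list"
  assumes "sorted_wrt (\<lambda>a b. b \<le> a) xs" "i \<le> j" "j < length xs"
  shows "xs ! j \<le> xs ! i"
  using assms sorted_wrt_nth_less[OF assms(1)] by (cases "i = j") auto

lemma even_concat: "(\<forall>f\<in>set fs. even (length f)) \<Longrightarrow> even (length (concat fs))"
  by (induction fs) auto

lemma lfact_ne: "(E::'a::linorder list) \<noteq> [] \<Longrightarrow> lfact E \<noteq> []"
  using concat_lfact[of E] by auto

lemma lfact_hd_le: "(E::'a::linorder list) \<noteq> [] \<Longrightarrow> hd (lfact E) \<le> E"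
proof -
  assume "E \<noteq> []"
  then obtain f fs where "lfact E = f # fs" using lfact_ne by (metis neq_Nil_conv)
  then show ?thesis using concat_lfact[of E] le_app by (metis concat.simps(2) list.sel(1))
qed

lemma lfact_le_hd: "g \<in> set (lfact (E::'a::linorder list)) \<Longrightarrow> g \<le> hd (lfact E)"
proof -
  assume g: "g \<in> set (lfact E)"
  then obtain f fs where fs: "lfact E = f # fs" by (metis neq_Nil_conv empty_iff list.set(1))
  have "sorted_wrt (\<lambda>a b. b \<le> a) (f # fs)" using lfact_sorted[of E] fs by simp
  then show ?thesis using g fs by auto
qed

lemma lfact_merge':
  fixes l E :: "'a::linorder list"
  assumes "lyndon l"
  shows "\<exists>j. lfact (l @ E) = (l @ concat (take j (lfact E))) # drop j (lfact E)"
  using lfact_merge[OF assms lfact_ok[of E]] lfact_eq by blast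

definition pinv :: "'a::linorder list \<Rightarrow> 'a list \<Rightarrow> bool" where
  "pinv Ob Eb \<longleftrightarrow> (\<forall>f\<in>set (lfact Ob). odd (length f)) \<and> distinct (lfact Ob)
    \<and> (\<forall>f\<in>set (lfact Eb). even (length f))
    \<and> (2 \<le> length (lfact Ob) \<longrightarrow> Eb < lfact Ob ! (length (lfact Ob) - 2))
    \<and> (1 \<le> length (lfact Ob) \<longrightarrow> Eb < last (lfact Ob) \<or> (Eb \<noteq> [] \<and>
        (\<forall>j. 0 < j \<and> j < length (last (lfact Ob)) \<longrightarrow>
           hd (lfact Eb) \<le> drop j (last (lfact Ob)) @ hd (lfact Eb))))"


lemma butlast_ge_last:
  fixes xs :: "'a::linorder list list"
  assumes "sorted_wrt (\<lambda>a b. b \<le> a) xs" "x \<in> set (butlast xs)"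
  shows "last xs \<le> x"
proof -
  have ne: "xs \<noteq> []" using assms(2) by auto
  have "sorted_wrt (\<lambda>a b. b \<le> a) (butlast xs @ [last xs])"
    using assms(1) append_butlast_last_id[OF ne] by simp
  then show ?thesis using assms(2) by (simp add: sorted_wrt_append)
qed

lemma sorted_butlast':
  fixes xs :: "'a::linorder list list"
  assumes "sorted_wrt (\<lambda>a b. b \<le> a) xs"
  shows "sorted_wrt (\<lambda>a b. b \<le> a) (butlast xs)"
  using assms by (simp add: butlast_conv_take sorted_wrt_take)

lemma is_lfact_snoc:
  fixes xs :: "'a::linorder list list"
  assumes "sorted_wrt (\<lambda>a b. b \<le> a) xs" "\<forall>x\<in>set xs. lyndon x" "lyndon y" "\<forall>x\<in>set xs. y \<le> x"
  shows "is_lfact (concat xs @ y) (xs @ [y])"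
  using assms unfolding is_lfact_iff by (simp add: sorted_wrt_append)




lemma caseS:
  fixes Ob Eb Ob' Eb' :: "'a::linorder list" and t :: steptype
  defines "os \<equiv> lfact Ob"
    and "os' \<equiv> lfact Ob'"
  defines "m \<equiv> length os"
    and "h \<equiv> length os'"
  defines "r \<equiv> std_r (last os)"
    and "s \<equiv> std_s (last os)"
  defines "oh' \<equiv> (if h \<ge> 1 then Some (os' ! (h - 1)) else None)"
    and "ohm1' \<equiv> (if h \<ge> 2 then Some (os' ! (h - 2)) else None)"
  defines "l \<equiv> (if t = StepS then s else if t = StepP then r else last os @ os ! (m - 2))"
  assumes I: "pinv Ob Eb" and len: "2 \<le> length Ob"
    and tS: "t = StepS" and spl: "splittable os" and rodd: "odd (length r)"
    and O': "Ob' = concat (butlast os) @ r" and E': "Eb' = s @ Eb"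
  shows "((\<forall>f\<in>set os'. odd (length f)) \<and> distinct os'
     \<and> (t = StepS \<longrightarrow> os' = butlast os @ [r])
     \<and> (t = StepP \<longrightarrow> os' = butlast os @ [s])
     \<and> (t = StepF \<longrightarrow> os' = take (m - 2) os)
     \<and> ext_less (Some Eb') ohm1'
     \<and> (t = StepF \<longrightarrow> ext_less (Some Eb') oh')
     \<and> (t = StepP \<longrightarrow> ext_less (Some Eb') oh' \<and> ext_less (Some Eb) oh')
     \<and> (t = StepS \<longrightarrow> hd (lfact Eb') = s \<and> ext_less oh' (Some s) \<and> ord_class.lexordp_eq s Eb')
     \<and> (\<forall>f\<in>set (lfact Eb'). even (length f))
     \<and> Eb' = l @ Eb \<and> length l \<le> length (hd (lfact Eb'))) \<and> pinv Ob' Eb'"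
proof -
  have cos: "concat os = Ob" unfolding os_def by (rule concat_lfact)
  then have osne: "os \<noteq> []" using len by auto
  then have m1: "1 \<le> m" unfolding m_def by (simp add: Suc_le_eq)
  have oslast: "os = butlast os @ [last os]" using osne by simp
  have lyos: "\<And>f. f \<in> set os \<Longrightarrow> lyndon f" unfolding os_def by (rule lfact_lyndon)
  have lom: "lyndon (last os)" using osne lyos by simp
  have srt: "sorted_wrt (\<lambda>a b. b \<le> a) os" unfolding os_def by (rule lfact_sorted)
  have oddO: "\<forall>f\<in>set os. odd (length f)" and dist: "distinct os"
    and evE: "\<forall>f\<in>set (lfact Eb). even (length f)"
    and cI: "2 \<le> m \<Longrightarrow> Eb < os ! (m - 2)"
    and dI: "Eb < last os \<or> (Eb \<noteq> [] \<and> (\<forall>j. 0 < j \<and> j < length (last os) \<longrightarrow>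
           hd (lfact Eb) \<le> drop j (last os) @ hd (lfact Eb)))"
    using I m1 unfolding pinv_def os_def m_def by auto
  have len2: "2 \<le> length (last os)" and slt: "2 \<le> m \<Longrightarrow> s < os ! (m - 2)"
    using spl unfolding splittable_def prev_fact_def s_def m_def by (auto split: if_splits)
  note sf = std_facts[OF lom len2, folded r_def s_def]
  have lastle: "\<forall>x\<in>set (butlast os). last os \<le> x"
    using butlast_ge_last[OF srt] by blast
  have rlt: "\<forall>x\<in>set (butlast os). r < x" using lastle sf(8) by (meson less_le_trans)
  have srtb: "sorted_wrt (\<lambda>a b. b \<le> a) (butlast os)"
    using sorted_butlast'[OF srt] .
  have lyb: "\<forall>x\<in>set (butlast os). lyndon x"
  proof
    fix x assume "x \<in> set (butlast os)"
    then have "x \<in> set os" by (rule in_set_butlastD)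
    then show "lyndon x" by (rule lyos)
  qed
  have "is_lfact Ob' (butlast os @ [r])"
    unfolding O' using is_lfact_snoc[OF srtb lyb sf(5)] rlt by (simp add: less_imp_le)
  then have os'eq: "os' = butlast os @ [r]" unfolding os'_def by (rule lfact_eq)
  have hm: "h = m" unfolding h_def m_def os'eq using osne by simp
  have oh'eq: "oh' = Some r" unfolding oh'_def hm os'eq using m1 m_def
    by (simp add: nth_append)
  have ohm1eq: "ohm1' = (if 2 \<le> m then Some (os ! (m - 2)) else None)"
    unfolding ohm1'_def hm os'eq using m_def by (auto simp: nth_append nth_butlast)
  have "odd (length (last os))" using oddO osne by simp
  then have seven: "even (length s)" using rodd sf(1) by (metis even_add length_append)
  have odd': "\<forall>f\<in>set os'. odd (length f)" unfolding os'eq using oddO rodd by (auto dest: in_set_butlastD)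
  have dist': "distinct os'" unfolding os'eq using dist rlt distinct_butlast by fastforce
  have ii: "2 \<le> m \<Longrightarrow> s @ Eb < os ! (m - 2)"
  proof -
    assume m2: "2 \<le> m"
    have "os ! (m - 2) \<in> set os" using m2 m_def by simp
    then have "lyndon (os ! (m - 2))" using lyos by blast
    then show ?thesis using sf(3) slt[OF m2] cI[OF m2] by (intro lyndon_app_less) auto
  qed
  have key: "Eb \<noteq> [] \<Longrightarrow> hd (lfact Eb) \<le> s"
  proof -
    assume Ene: "Eb \<noteq> []"
    from dI show ?thesis
    proof
      assume "Eb < last os"
      then show ?thesis using lfact_hd_le[OF Ene] sf(7) by simp
    next
      assume d2: "Eb \<noteq> [] \<and> (\<forall>j. 0 < j \<and> j < length (last os) \<longrightarrow>
           hd (lfact Eb) \<le> drop j (last os) @ hd (lfact Eb))"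
      have "drop (length r) (last os) = s" using sf(1) by simp
      moreover have "0 < length r" "length r < length (last os)" using sf(1,2,3) by auto
      ultimately have "hd (lfact Eb) \<le> s @ hd (lfact Eb)" using d2 by metis
      moreover have "lyndon (hd (lfact Eb))" using lfact_ne[OF Ene] lfact_lyndon by (metis list.set_sel(1))
      ultimately show ?thesis using lyndon_le_prefix sf(3) by blast
    qed
  qed
  have lfE': "lfact Eb' = s # lfact Eb"
  proof (rule lfact_eq)
    have "\<forall>g\<in>set (lfact Eb). g \<le> s"
    proof
      fix g assume g: "g \<in> set (lfact Eb)"
      then have "Eb \<noteq> []" by (cases "Eb = []") (auto simp add: lfact_Nil)
      then show "g \<le> s" using key lfact_le_hd[OF g] by (meson order_trans)
    qed
    then show "is_lfact Eb' (s # lfact Eb)" unfolding E'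
      using lfact_cons_nomerge[OF sf(4) lfact_ok] by blast
  qed
  have evE': "\<forall>f\<in>set (lfact Eb'). even (length f)" unfolding lfE' using seven evE by simp
  have lS: "l = s" unfolding l_def using tS by simp
  have C:     "(\<forall>f\<in>set os'. odd (length f)) \<and> distinct os'
     \<and> (t = StepS \<longrightarrow> os' = butlast os @ [r])
     \<and> (t = StepP \<longrightarrow> os' = butlast os @ [s])
     \<and> (t = StepF \<longrightarrow> os' = take (m - 2) os)
     \<and> ext_less (Some Eb') ohm1'
     \<and> (t = StepF \<longrightarrow> ext_less (Some Eb') oh')
     \<and> (t = StepP \<longrightarrow> ext_less (Some Eb') oh' \<and> ext_less (Some Eb) oh')
     \<and> (t = StepS \<longrightarrow> hd (lfact Eb') = s \<and> ext_less oh' (Some s) \<and> ord_class.lexordp_eq s Eb')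
     \<and> (\<forall>f\<in>set (lfact Eb'). even (length f))
     \<and> Eb' = l @ Eb \<and> length l \<le> length (hd (lfact Eb'))"
    using odd' dist' os'eq tS ohm1eq ii oh'eq lfE' sf(6) le_app[of s Eb] evE' E' lS by auto
  have "pinv Ob' Eb'"
  proof -
    have "\<forall>j. 0 < j \<and> j < length r \<longrightarrow> s \<le> drop j r @ s"
    proof (intro allI impI)
      fix j assume j: "0 < j \<and> j < length r"
      then have "drop j r @ s = drop j (last os)" using sf(1) by simp
      then show "s \<le> drop j r @ s" using j sf(9)[of j] sf(1) by simp
    qed
    then show ?thesis
      unfolding pinv_def os'_def[symmetric] using odd' dist' evE' ii hm os'eq lfE' E' osne m_def
      by (auto simp: nth_append nth_butlast)
  qed
  with C show ?thesis by blast
qed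

lemma caseP:
  fixes Ob Eb Ob' Eb' :: "'a::linorder list" and t :: steptype
  defines "os \<equiv> lfact Ob"
    and "os' \<equiv> lfact Ob'"
  defines "m \<equiv> length os"
    and "h \<equiv> length os'"
  defines "r \<equiv> std_r (last os)"
    and "s \<equiv> std_s (last os)"
  defines "oh' \<equiv> (if h \<ge> 1 then Some (os' ! (h - 1)) else None)"
    and "ohm1' \<equiv> (if h \<ge> 2 then Some (os' ! (h - 2)) else None)"
  defines "l \<equiv> (if t = StepS then s else if t = StepP then r else last os @ os ! (m - 2))"
  assumes I: "pinv Ob Eb" and len: "2 \<le> length Ob"
    and tP: "t = StepP" and spl: "splittable os" and reven: "even (length r)"
    and O': "Ob' = concat (butlast os) @ s" and E': "Eb' = r @ Eb"
  shows "((\<forall>f\<in>set os'. odd (length f)) \<and> distinct os'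
     \<and> (t = StepS \<longrightarrow> os' = butlast os @ [r])
     \<and> (t = StepP \<longrightarrow> os' = butlast os @ [s])
     \<and> (t = StepF \<longrightarrow> os' = take (m - 2) os)
     \<and> ext_less (Some Eb') ohm1'
     \<and> (t = StepF \<longrightarrow> ext_less (Some Eb') oh')
     \<and> (t = StepP \<longrightarrow> ext_less (Some Eb') oh' \<and> ext_less (Some Eb) oh')
     \<and> (t = StepS \<longrightarrow> hd (lfact Eb') = s \<and> ext_less oh' (Some s) \<and> ord_class.lexordp_eq s Eb')
     \<and> (\<forall>f\<in>set (lfact Eb'). even (length f))
     \<and> Eb' = l @ Eb \<and> length l \<le> length (hd (lfact Eb'))) \<and> pinv Ob' Eb'"
proof -
  have cos: "concat os = Ob" unfolding os_def by (rule concat_lfact)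
  then have osne: "os \<noteq> []" using len by auto
  then have m1: "1 \<le> m" unfolding m_def by (simp add: Suc_le_eq)
  have lyos: "\<And>f. f \<in> set os \<Longrightarrow> lyndon f" unfolding os_def by (rule lfact_lyndon)
  have lom: "lyndon (last os)" using osne lyos by simp
  have srt: "sorted_wrt (\<lambda>a b. b \<le> a) os" unfolding os_def by (rule lfact_sorted)
  have oddO: "\<forall>f\<in>set os. odd (length f)" and dist: "distinct os"
    and evE: "\<forall>f\<in>set (lfact Eb). even (length f)"
    and cI: "2 \<le> m \<Longrightarrow> Eb < os ! (m - 2)"
    and dI: "Eb < last os \<or> (Eb \<noteq> [] \<and> (\<forall>j. 0 < j \<and> j < length (last os) \<longrightarrow>
           hd (lfact Eb) \<le> drop j (last os) @ hd (lfact Eb)))"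
    using I m1 unfolding pinv_def os_def m_def by auto
  have len2: "2 \<le> length (last os)" and slt: "2 \<le> m \<Longrightarrow> s < os ! (m - 2)"
    using spl unfolding splittable_def prev_fact_def s_def m_def by (auto split: if_splits)
  note sf = std_facts[OF lom len2, folded r_def s_def]
  have lastnth: "last os = os ! (m - 1)" using osne m_def by (simp add: last_conv_nth)
  have lastlt: "2 \<le> m \<Longrightarrow> last os < os ! (m - 2)"
    unfolding lastnth m_def using strict_nth[OF srt dist] by simp
  have bl: "\<And>x. x \<in> set (butlast os) \<Longrightarrow> 2 \<le> m \<and> os ! (m - 2) \<le> x"
  proof -
    fix x assume x: "x \<in> set (butlast os)"
    then obtain i where i: "i < length (butlast os)" "x = butlast os ! i" by (metis in_set_conv_nth)
    then have i2: "i < m - 1" "x = os ! i" using m_def by (auto simp: nth_butlast)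
    then have "2 \<le> m" by simp
    moreover have "os ! (m - 2) \<le> os ! i" using i2 m_def by (intro le_nth_sorted[OF srt]) auto
    ultimately show "2 \<le> m \<and> os ! (m - 2) \<le> x" using i2 by simp
  qed
  have slt2: "\<forall>x\<in>set (butlast os). s < x" using bl slt by (meson less_le_trans)
  have srtb: "sorted_wrt (\<lambda>a b. b \<le> a) (butlast os)"
    using sorted_butlast'[OF srt] .
  have lyb: "\<forall>x\<in>set (butlast os). lyndon x"
  proof
    fix x assume "x \<in> set (butlast os)"
    then have "x \<in> set os" by (rule in_set_butlastD)
    then show "lyndon x" by (rule lyos)
  qed
  have "is_lfact Ob' (butlast os @ [s])"
    unfolding O' using is_lfact_snoc[OF srtb lyb sf(4)] slt2 by (simp add: less_imp_le)
  then have os'eq: "os' = butlast os @ [s]" unfolding os'_def by (rule lfact_eq)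
  have hm: "h = m" unfolding h_def m_def os'eq using osne by simp
  have oh'eq: "oh' = Some s" unfolding oh'_def hm os'eq using m1 m_def
    by (simp add: nth_append)
  have ohm1eq: "ohm1' = (if 2 \<le> m then Some (os ! (m - 2)) else None)"
    unfolding ohm1'_def hm os'eq using m_def by (auto simp: nth_append nth_butlast)
  have "odd (length (last os))" using oddO osne by simp
  then have sodd: "odd (length s)" using reven sf(1) by (metis even_add length_append)
  have odd': "\<forall>f\<in>set os'. odd (length f)" unfolding os'eq using oddO sodd by (auto dest: in_set_butlastD)
  have dist': "distinct os'" unfolding os'eq using dist slt2 distinct_butlast by fastforce
  have ii: "2 \<le> m \<Longrightarrow> r @ Eb < os ! (m - 2)"
  proof -
    assume m2: "2 \<le> m"
    have "os ! (m - 2) \<in> set os" using m2 m_def by simp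
    then have "lyndon (os ! (m - 2))" using lyos by blast
    moreover have "r < os ! (m - 2)" using sf(8) lastlt[OF m2] by simp
    ultimately show ?thesis using sf(2) cI[OF m2] by (intro lyndon_app_less) auto
  qed
  have Es: "Eb < s"
  proof (cases "Eb < last os")
    case True then show ?thesis using sf(7) by simp
  next
    case False
    with dI have Ene: "Eb \<noteq> []" and d2: "\<forall>j. 0 < j \<and> j < length (last os) \<longrightarrow>
           hd (lfact Eb) \<le> drop j (last os) @ hd (lfact Eb)" by auto
    have "drop (length r) (last os) = s" using sf(1) by simp
    moreover have "0 < length r" "length r < length (last os)" using sf(1,2,3) by auto
    ultimately have "hd (lfact Eb) \<le> s @ hd (lfact Eb)" using d2 by metis
    moreover have hdin: "hd (lfact Eb) \<in> set (lfact Eb)" using lfact_ne[OF Ene] by simp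
    moreover have "lyndon (hd (lfact Eb))" using hdin lfact_lyndon by blast
    ultimately have "hd (lfact Eb) \<le> s" using lyndon_le_prefix sf(3) by blast
    moreover have "hd (lfact Eb) \<noteq> s" using hdin evE sodd by auto
    ultimately have hlt: "hd (lfact Eb) < s" by simp
    have "concat (lfact Eb) < s"
    proof (rule concat_less[where c = "hd (lfact Eb)"])
      show "s \<noteq> []" by (rule sf(3))
      show "\<forall>j<length s. hd (lfact Eb) < drop j s"
        using hlt lyndon_le_drop[OF sf(4)] by (meson less_le_trans)
      show "\<forall>f\<in>set (lfact Eb). f \<le> hd (lfact Eb)" using lfact_le_hd by blast
    qed
    then show ?thesis by (simp add: concat_lfact)
  qed
  have rEs: "r @ Eb < s" using sf(4,2,6) Es by (intro lyndon_app_less) auto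
  obtain j where lfE': "lfact Eb' = (r @ concat (take j (lfact Eb))) # drop j (lfact Eb)"
    using lfact_merge'[OF sf(5)] E' by blast
  have evE': "\<forall>f\<in>set (lfact Eb'). even (length f)"
  proof -
    have "even (length (concat (take j (lfact Eb))))"
      using evE by (intro even_concat) (auto dest: in_set_takeD)
    then have "even (length (r @ concat (take j (lfact Eb))))" using reven by simp
    moreover have "\<forall>f\<in>set (drop j (lfact Eb)). even (length f)" using evE by (auto dest: in_set_dropD)
    ultimately show ?thesis unfolding lfE' by simp
  qed
  have lP: "l = r" unfolding l_def using tP by simp
  have C:     "(\<forall>f\<in>set os'. odd (length f)) \<and> distinct os'
     \<and> (t = StepS \<longrightarrow> os' = butlast os @ [r])
     \<and> (t = StepP \<longrightarrow> os' = butlast os @ [s])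
     \<and> (t = StepF \<longrightarrow> os' = take (m - 2) os)
     \<and> ext_less (Some Eb') ohm1'
     \<and> (t = StepF \<longrightarrow> ext_less (Some Eb') oh')
     \<and> (t = StepP \<longrightarrow> ext_less (Some Eb') oh' \<and> ext_less (Some Eb) oh')
     \<and> (t = StepS \<longrightarrow> hd (lfact Eb') = s \<and> ext_less oh' (Some s) \<and> ord_class.lexordp_eq s Eb')
     \<and> (\<forall>f\<in>set (lfact Eb'). even (length f))
     \<and> Eb' = l @ Eb \<and> length l \<le> length (hd (lfact Eb'))"
    using odd' dist' os'eq tP ohm1eq ii oh'eq lfE' evE' E' lP Es rEs by auto
  have "pinv Ob' Eb'"
    unfolding pinv_def os'_def[symmetric] using odd' dist' evE' ii hm os'eq rEs E' osne m_def
    by (auto simp: nth_append nth_butlast)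
  with C show ?thesis by blast
qed

lemma caseF:
  fixes Ob Eb Ob' Eb' :: "'a::linorder list" and t :: steptype
  defines "os \<equiv> lfact Ob"
    and "os' \<equiv> lfact Ob'"
  defines "m \<equiv> length os"
    and "h \<equiv> length os'"
  defines "r \<equiv> std_r (last os)"
    and "s \<equiv> std_s (last os)"
  defines "oh' \<equiv> (if h \<ge> 1 then Some (os' ! (h - 1)) else None)"
    and "ohm1' \<equiv> (if h \<ge> 2 then Some (os' ! (h - 2)) else None)"
  defines "l \<equiv> (if t = StepS then s else if t = StepP then r else last os @ os ! (m - 2))"
  assumes I: "pinv Ob Eb" and len: "2 \<le> length Ob"
    and tF: "t = StepF" and nspl: "\<not> splittable os"
    and O': "Ob' = concat (take (m - 2) os)" and E': "Eb' = last os @ os ! (m - 2) @ Eb"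
  shows "((\<forall>f\<in>set os'. odd (length f)) \<and> distinct os'
     \<and> (t = StepS \<longrightarrow> os' = butlast os @ [r])
     \<and> (t = StepP \<longrightarrow> os' = butlast os @ [s])
     \<and> (t = StepF \<longrightarrow> os' = take (m - 2) os)
     \<and> ext_less (Some Eb') ohm1'
     \<and> (t = StepF \<longrightarrow> ext_less (Some Eb') oh')
     \<and> (t = StepP \<longrightarrow> ext_less (Some Eb') oh' \<and> ext_less (Some Eb) oh')
     \<and> (t = StepS \<longrightarrow> hd (lfact Eb') = s \<and> ext_less oh' (Some s) \<and> ord_class.lexordp_eq s Eb')
     \<and> (\<forall>f\<in>set (lfact Eb'). even (length f))
     \<and> Eb' = l @ Eb \<and> length l \<le> length (hd (lfact Eb'))) \<and> pinv Ob' Eb'"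
proof -
  have cos: "concat os = Ob" unfolding os_def by (rule concat_lfact)
  then have osne: "os \<noteq> []" using len by auto
  then have m1: "1 \<le> m" unfolding m_def by (simp add: Suc_le_eq)
  have lyos: "\<And>f. f \<in> set os \<Longrightarrow> lyndon f" unfolding os_def by (rule lfact_lyndon)
  have srt: "sorted_wrt (\<lambda>a b. b \<le> a) os" unfolding os_def by (rule lfact_sorted)
  have oddO: "\<forall>f\<in>set os. odd (length f)" and dist: "distinct os"
    and evE: "\<forall>f\<in>set (lfact Eb). even (length f)"
    and cI: "2 \<le> m \<Longrightarrow> Eb < os ! (m - 2)"
    using I m1 unfolding pinv_def os_def m_def by auto
  have m2: "2 \<le> m"
  proof (rule ccontr)
    assume "\<not> 2 \<le> m"
    then have "m = 1" using m1 by simp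
    then obtain x where x: "os = [x]" using m_def by (metis One_nat_def length_0_conv length_Suc_conv)
    then have "x = Ob" using cos by simp
    then have "splittable os" using x len unfolding splittable_def prev_fact_def by simp
    then show False using nspl by simp
  qed
  have nth_in: "\<And>i. i < m \<Longrightarrow> os ! i \<in> set os" using m_def by simp
  have lastnth: "last os = os ! (m - 1)" using osne m_def by (simp add: last_conv_nth)
  define a where "a = os ! (m - 2)"
  define b where "b = last os"
  have la: "lyndon a" unfolding a_def using m2 nth_in lyos by simp
  have lb: "lyndon b" unfolding b_def using osne lyos by simp
  have ba: "b < a" unfolding a_def b_def lastnth m_def using strict_nth[OF srt dist] m2 m_def by simp
  have oa: "odd (length a)" unfolding a_def using m2 nth_in oddO by simp
  have ob: "odd (length b)" unfolding b_def using osne oddO by simp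
  have lba: "lyndon (b @ a)" using lyndon_concat[OF lb la ba] .
  have eba: "even (length (b @ a))" using oa ob by simp
  have "is_lfact Ob' (take (m - 2) os)"
    unfolding O' is_lfact_iff using lyos srt by (auto dest: in_set_takeD simp: sorted_wrt_take)
  then have os'eq: "os' = take (m - 2) os" unfolding os'_def by (rule lfact_eq)
  have hm: "h = m - 2" unfolding h_def os'eq m_def by simp
  have odd': "\<forall>f\<in>set os'. odd (length f)" unfolding os'eq using oddO by (auto dest: in_set_takeD)
  have dist': "distinct os'" unfolding os'eq using dist by simp
  have iii: "3 \<le> m \<Longrightarrow> b @ a @ Eb < os ! (m - 3)"
  proof -
    assume m3: "3 \<le> m"
    define c where "c = os ! (m - 3)"
    have lc: "lyndon c" unfolding c_def using m3 nth_in lyos by simp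
    have ac: "a < c" unfolding a_def c_def using strict_nth[OF srt dist] m3 m_def by simp
    have "a @ Eb < c" using lc la ac cI[OF m2] lyndon_ne[OF la] unfolding a_def[symmetric]
      by (intro lyndon_app_less) auto
    moreover have "b < c" using ba ac by simp
    ultimately show ?thesis unfolding c_def[symmetric] using lc lyndon_ne[OF lb]
      by (intro lyndon_app_less) auto
  qed
  have ii: "4 \<le> m \<Longrightarrow> b @ a @ Eb < os ! (m - 4)"
  proof -
    assume m4: "4 \<le> m"
    have "os ! (m - 3) < os ! (m - 4)" using strict_nth[OF srt dist] m4 m_def by simp
    moreover have "3 \<le> m" using m4 by simp
    ultimately show ?thesis using iii by (meson less_trans)
  qed
  have oh'eq: "oh' = (if 3 \<le> m then Some (os ! (m - 3)) else None)"
    unfolding oh'_def hm os'eq using m_def by auto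
  have ohm1eq: "ohm1' = (if 4 \<le> m then Some (os ! (m - 4)) else None)"
    unfolding ohm1'_def hm os'eq using m_def by auto
  obtain j where lfE': "lfact Eb' = ((b @ a) @ concat (take j (lfact Eb))) # drop j (lfact Eb)"
    using lfact_merge'[OF lba] E' unfolding a_def b_def by (metis append_assoc)
  have evE': "\<forall>f\<in>set (lfact Eb'). even (length f)"
  proof -
    have "even (length (concat (take j (lfact Eb))))"
      using evE by (intro even_concat) (auto dest: in_set_takeD)
    then have "even (length ((b @ a) @ concat (take j (lfact Eb))))" using eba by simp
    moreover have "\<forall>f\<in>set (drop j (lfact Eb)). even (length f)" using evE by (auto dest: in_set_dropD)
    ultimately show ?thesis unfolding lfE' by simp
  qed
  have lF: "l = b @ a" unfolding l_def a_def b_def using tF by simp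
  have E'': "Eb' = b @ a @ Eb" unfolding E' a_def b_def ..
  have C:     "(\<forall>f\<in>set os'. odd (length f)) \<and> distinct os'
     \<and> (t = StepS \<longrightarrow> os' = butlast os @ [r])
     \<and> (t = StepP \<longrightarrow> os' = butlast os @ [s])
     \<and> (t = StepF \<longrightarrow> os' = take (m - 2) os)
     \<and> ext_less (Some Eb') ohm1'
     \<and> (t = StepF \<longrightarrow> ext_less (Some Eb') oh')
     \<and> (t = StepP \<longrightarrow> ext_less (Some Eb') oh' \<and> ext_less (Some Eb) oh')
     \<and> (t = StepS \<longrightarrow> hd (lfact Eb') = s \<and> ext_less oh' (Some s) \<and> ord_class.lexordp_eq s Eb')
     \<and> (\<forall>f\<in>set (lfact Eb'). even (length f))
     \<and> Eb' = l @ Eb \<and> length l \<le> length (hd (lfact Eb'))"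
    using odd' dist' os'eq tF ohm1eq ii oh'eq iii lfE' evE' E'' lF by auto
  have lasteq: "3 \<le> m \<Longrightarrow> last os' = os ! (m - 3)"
  proof -
    assume m3: "3 \<le> m"
    have ne: "os' \<noteq> []" and lo: "length os' = m - 2" unfolding os'eq using m3 m_def by auto
    have "last os' = os' ! (m - 3)" using last_conv_nth[OF ne] lo by (simp add: numeral_3_eq_3)
    also have "\<dots> = os ! (m - 3)" unfolding os'eq using m3 by simp
    finally show ?thesis .
  qed
  have nth2: "4 \<le> m \<Longrightarrow> os' ! (length os' - 2) = os ! (m - 4)"
    unfolding os'eq m_def by simp
  have X1: "2 \<le> length os' \<longrightarrow> Eb' < os' ! (length os' - 2)"
    using ii nth2 hm h_def E'' by simp
  have X2: "1 \<le> length os' \<longrightarrow> Eb' < last os'"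
    using iii lasteq hm h_def E'' by simp
  have "pinv Ob' Eb'"
    unfolding pinv_def os'_def[symmetric] using odd' dist' evE' X1 X2 by blast
  with C show ?thesis by blast
qed

lemma step_main:
  fixes Ob Eb Ob' Eb' :: "'a::linorder list" and t :: steptype
  defines "os \<equiv> lfact Ob"
    and "os' \<equiv> lfact Ob'"
  defines "m \<equiv> length os"
    and "h \<equiv> length os'"
  defines "r \<equiv> std_r (last os)"
    and "s \<equiv> std_s (last os)"
  defines "oh' \<equiv> (if h \<ge> 1 then Some (os' ! (h - 1)) else None)"
    and "ohm1' \<equiv> (if h \<ge> 2 then Some (os' ! (h - 2)) else None)"
  defines "l \<equiv> (if t = StepS then s else if t = StepP then r else last os @ os ! (m - 2))"
  assumes I: "pinv Ob Eb" and st: "psi_step Ob Eb t Ob' Eb'"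
  shows "((\<forall>f\<in>set os'. odd (length f)) \<and> distinct os'
     \<and> (t = StepS \<longrightarrow> os' = butlast os @ [r])
     \<and> (t = StepP \<longrightarrow> os' = butlast os @ [s])
     \<and> (t = StepF \<longrightarrow> os' = take (m - 2) os)
     \<and> ext_less (Some Eb') ohm1'
     \<and> (t = StepF \<longrightarrow> ext_less (Some Eb') oh')
     \<and> (t = StepP \<longrightarrow> ext_less (Some Eb') oh' \<and> ext_less (Some Eb) oh')
     \<and> (t = StepS \<longrightarrow> hd (lfact Eb') = s \<and> ext_less oh' (Some s) \<and> ord_class.lexordp_eq s Eb')
     \<and> (\<forall>f\<in>set (lfact Eb'). even (length f))
     \<and> Eb' = l @ Eb \<and> length l \<le> length (hd (lfact Eb'))) \<and> pinv Ob' Eb'"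
proof -
  have len: "2 \<le> length Ob" using st unfolding psi_step_def by simp
  have D: "(t = StepS \<and> splittable os \<and> odd (length r) \<and> Ob' = concat (butlast os) @ r \<and> Eb' = s @ Eb)
    \<or> (t = StepP \<and> splittable os \<and> even (length r) \<and> Ob' = concat (butlast os) @ s \<and> Eb' = r @ Eb)
    \<or> (t = StepF \<and> \<not> splittable os \<and> Ob' = concat (take (m - 2) os)
         \<and> Eb' = last os @ os ! (m - 2) @ Eb)"
    using st unfolding psi_step_def Let_def os_def m_def r_def s_def by simp
  then show ?thesis
  proof (elim disjE conjE)
    assume a: "t = StepS" "splittable os" "odd (length r)" "Ob' = concat (butlast os) @ r" "Eb' = s @ Eb"
    show ?thesis unfolding os_def os'_def m_def h_def r_def s_def oh'_def ohm1'_def l_def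
      by (rule caseS[OF I len a[unfolded os_def m_def r_def s_def]])
  next
    assume a: "t = StepP" "splittable os" "even (length r)" "Ob' = concat (butlast os) @ s" "Eb' = r @ Eb"
    show ?thesis unfolding os_def os'_def m_def h_def r_def s_def oh'_def ohm1'_def l_def
      by (rule caseP[OF I len a[unfolded os_def m_def r_def s_def]])
  next
    assume a: "t = StepF" "\<not> splittable os" "Ob' = concat (take (m - 2) os)" "Eb' = last os @ os ! (m - 2) @ Eb"
    show ?thesis unfolding os_def os'_def m_def h_def r_def s_def oh'_def ohm1'_def l_def
      by (rule caseF[OF I len a[unfolded os_def m_def r_def s_def]])
  qed
qed

lemma pinv_init:
  fixes w :: "'a::linorder list"
  assumes "in_Wo w"
  shows "pinv w []"
proof -
  have ne: "\<And>i. i < length (lfact w) \<Longrightarrow> [] < lfact w ! i"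
  proof -
    fix i assume "i < length (lfact w)"
    then have "lfact w ! i \<in> set (lfact w)" by simp
    then have "lfact w ! i \<noteq> []" using lfact_lyndon lyndon_ne by blast
    then show "[] < lfact w ! i" by (cases "lfact w ! i") auto
  qed
  have "1 \<le> length (lfact w) \<Longrightarrow> [] < last (lfact w)"
  proof -
    assume "1 \<le> length (lfact w)"
    then have "lfact w \<noteq> []" and "length (lfact w) - 1 < length (lfact w)" by auto
    then show ?thesis using ne[of "length (lfact w) - 1"] by (simp add: last_conv_nth)
  qed
  moreover have "2 \<le> length (lfact w) \<Longrightarrow> [] < lfact w ! (length (lfact w) - 2)"
    using ne by simp
  ultimately show ?thesis using assms unfolding pinv_def in_Wo_def by (simp add: lfact_Nil)
qed

lemma reach_inv:
  fixes w :: "'a::linorder list"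
  assumes "in_Wo w" "psi_reach w Ob Eb"
  shows "pinv Ob Eb"
  using assms(2)
proof induction
  case init then show ?case using pinv_init[OF assms(1)] .
next
  case (step Ob Eb t Ob' Eb')
  then show ?case using conjunct2[OF step_main] by blast
qed

theorem lemma4p21:
  fixes w Ob Eb Ob' Eb' :: "'a::{linorder, finite} list" and t :: steptype
  assumes "in_Wo w"
    and "psi_reach w Ob Eb"
    and "psi_step Ob Eb t Ob' Eb'"
  defines "os \<equiv> lfact Ob"
    and "os' \<equiv> lfact Ob'"
  defines "m \<equiv> length os"
    and "h \<equiv> length os'"
  defines "r \<equiv> std_r (last os)"
    and "s \<equiv> std_s (last os)"
  defines "oh' \<equiv> (if h \<ge> 1 then Some (os' ! (h - 1)) else None)"
    and "ohm1' \<equiv> (if h \<ge> 2 then Some (os' ! (h - 2)) else None)"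
  defines "l \<equiv> (if t = StepS then s else if t = StepP then r else last os @ os ! (m - 2))"
  shows
    \<comment> \<open>(i)\<close>
    "(\<forall>f\<in>set os'. odd (length f)) \<and> distinct os'
     \<and> (t = StepS \<longrightarrow> os' = butlast os @ [r])
     \<and> (t = StepP \<longrightarrow> os' = butlast os @ [s])
     \<and> (t = StepF \<longrightarrow> os' = take (m - 2) os)
     \<comment> \<open>(ii)\<close>
     \<and> ext_less (Some Eb') ohm1'
     \<comment> \<open>(iii)\<close>
     \<and> (t = StepF \<longrightarrow> ext_less (Some Eb') oh')
     \<comment> \<open>(iv)\<close>
     \<and> (t = StepP \<longrightarrow> ext_less (Some Eb') oh' \<and> ext_less (Some Eb) oh')
     \<comment> \<open>(v)\<close>
     \<and> (t = StepS \<longrightarrow> hd (lfact Eb') = s \<and> ext_less oh' (Some s) \<and> ord_class.lexordp_eq s Eb')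
     \<comment> \<open>(vi)\<close>
     \<and> (\<forall>f\<in>set (lfact Eb'). even (length f))
     \<and> Eb' = l @ Eb \<and> length l \<le> length (hd (lfact Eb'))"
proof -
  have I: "pinv Ob Eb" using reach_inv assms(1,2) by blast
  show ?thesis unfolding os_def os'_def m_def h_def r_def s_def oh'_def ohm1'_def l_def
    by (rule conjunct1[OF step_main[OF I assms(3)]])
qed



end
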